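(* Let $q>1$ and $0<u<1$. For every $N\ge0$ and every partition $\lambda$, the probability that the Young Tableau Algorithm has produced the partition $\lambda$ at the end of interval $N$ equals $P^N_{x,y,0,1/q}(\lambda)$, where $x=(u/q,u/q^2,\dots)$ and $y=(1,1/q,1/q^2,\dots)$; explicitly this is $0$ if $\lambda$ has more than $N$ parts and otherwise $$\frac{u^{|\lambda|}\,(u/q)_N\,(1/q)_N}{(1/q)_{N-\lambda'_1}}\prod_{i\ge1}\frac{1}{q^{(\lambda'_i)^2}(1/q)_{m_i(\lambda)}}.$$
   Context: $(a)_N=(1-a)(1-a/q)\cdots(1-a/q^{N-1})$, $(a)_0=1$. $\lambda'_s$ is the length of column $s$ of $\lambda$ ($0$ if empty); $m_i(\lambda)$ is the number of parts equal to $i$. $P^N_{x,y,0,t}(\lambda)=\frac{P_\lambda(x_1,\dots,x_N,0,\dots;0,t)P_\lambda(y;0,t)b_\lambda(0,t)}{\Pi((x_1,\dots,x_N,0,\dots),y;0,t)}$ (zero if $\lambda$ has more than $N$ parts), where $P_\lambda(\cdot;0,t)$ is the Hall–Littlewood polynomial, $b_\lambda(0,t)=\prod_{s\in\lambda}\frac{1-0^{a(s)}t^{l(s)+1}}{1-0^{a(s)+1}t^{l(s)}}$ ($0^0=1$; $a(s),l(s)$ arm and leg), $\Pi(x,y;0,t)=\prod_{i,j}\frac{1-tx_iy_j}{1-x_iy_j}$. Young Tableau Algorithm: coins indexed by $N\ge1$, coin $N$ showing heads with probability $u/q^N$, all flips independent. Start with $\lambda=\emptyset$, $N=1$. Flip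 coin $N$. If tails, interval $N$ ends; set $N\to N+1$ and flip the new coin. If heads, choose a column $S\ge1$ with $\Pr(S=1)=\frac{q^{N-\lambda'_1}-1}{q^N-1}$ and $\Pr(S=s)=\frac{q^{N-\lambda'_s}-q^{N-\lambda'_{s-1}}}{q^N-1}$ for $s>1$ (computed from the current $\lambda$), add one box at the bottom of column $S$, and flip coin $N$ again. *)

theory Defs
  imports Complex_Main
begin

definition is_partition :: "nat list \<Rightarrow> bool" where
  "is_partition lam \<longleftrightarrow> sorted_wrt (\<ge>) lam \<and> 0 \<notin> set lam"

definition size_part :: "nat list \<Rightarrow> nat" where
  "size_part lam = sum_list lam"

definition first_part :: "nat list \<Rightarrow> nat" where
  "first_part lam = (case lam of [] \<Rightarrow> 0 | x # _ \<Rightarrow> x)"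

definition conj_part :: "nat list \<Rightarrow> nat \<Rightarrow> nat" where
  "conj_part lam s = length (filter (\<lambda>x. s \<le> x) lam)"

definition mult_part :: "nat list \<Rightarrow> nat \<Rightarrow> nat" where
  "mult_part lam i = count_list lam i"

definition qpoch :: "real \<Rightarrow> real \<Rightarrow> nat \<Rightarrow> real" where
  "qpoch q a N = (\<Prod>k<N. 1 - a / q ^ k)"

text \<open>Add one box at the bottom of column s.\<close>
definition add_box :: "nat list \<Rightarrow> nat \<Rightarrow> nat list" where
  "add_box lam s = (let c = conj_part lam s in
     if c < length lam then lam[c := lam ! c + 1] else lam @ [1])"

text \<open>Probability that, during interval N with current partition lam, column s is chosen.\<close>
definition col_prob :: "real \<Rightarrow> nat \<Rightarrow> nat list \<Rightarrow> nat \<Rightarrow> real" where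
  "col_prob q N lam s =
     (if s = 1 then (q powi (int N - int (conj_part lam 1)) - 1) / (q ^ N - 1)
      else (q powi (int N - int (conj_part lam s)) - q powi (int N - int (conj_part lam (s - 1))))
             / (q ^ N - 1))"

text \<open>Probability that, during interval N, starting from mu, the next k coin flips are heads
  and the resulting partition is lam.  Columns s > first_part mu + 1 have probability 0
  and are omitted from the sum.\<close>
fun heads_walk :: "real \<Rightarrow> real \<Rightarrow> nat \<Rightarrow> nat \<Rightarrow> nat list \<Rightarrow> nat list \<Rightarrow> real" where
  "heads_walk q u N 0 mu lam = (if mu = lam then 1 else 0)"
| "heads_walk q u N (Suc k) mu lam =
     (\<Sum>s\<in>{1..first_part mu + 1}. (u / q ^ N) * col_prob q N mu s
        * heads_walk q u N k (add_box mu s) lam)"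

text \<open>Transition probability over interval N: some number k of heads followed by a tail.\<close>
definition interval_kernel :: "real \<Rightarrow> real \<Rightarrow> nat \<Rightarrow> nat list \<Rightarrow> nat list \<Rightarrow> real" where
  "interval_kernel q u N mu lam = (\<Sum>k. heads_walk q u N k mu lam * (1 - u / q ^ N))"

text \<open>Probability that the algorithm has produced lam at the end of interval N
  (end of interval 0 = initial empty partition).  Only partitions mu with
  |mu| \<le> |lam| can lead to lam, so the sum is restricted to these.\<close>
fun yta_dist :: "real \<Rightarrow> real \<Rightarrow> nat \<Rightarrow> nat list \<Rightarrow> real" where
  "yta_dist q u 0 lam = (if lam = [] then 1 else 0)"
| "yta_dist q u (Suc N) lam =
     (\<Sum>mu\<in>{mu. is_partition mu \<and> size_part mu \<le> size_part lam}.
        yta_dist q u N mu * interval_kernel q u (Suc N) mu lam)"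

end

theory Submission
  imports Defs
begin


lemma conj_Nil[simp]: "conj_part [] t = 0" by (simp add: conj_part_def)
lemma conj_Cons: "conj_part (x#xs) t = (if t \<le> x then Suc (conj_part xs t) else conj_part xs t)"
  by (simp add: conj_part_def)
lemma conj_app: "conj_part (xs @ ys) t = conj_part xs t + conj_part ys t"
  by (simp add: conj_part_def)

lemma part_Cons: "is_partition (x#xs) \<longleftrightarrow> (\<forall>y\<in>set xs. y \<le> x) \<and> 0 < x \<and> is_partition xs"
  by (auto simp: is_partition_def)

lemma conj_nth: "sorted_wrt (\<ge>) a \<Longrightarrow> i < length a \<Longrightarrow> (t \<le> a!i \<longleftrightarrow> i < conj_part a t)"
proof (induction a arbitrary: i)
  case Nil then show ?case by simp
next
  case (Cons x xs)
  show ?case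
  proof (cases "t \<le> x")
    case True
    then show ?thesis using Cons by (cases i) (auto simp: conj_Cons)
  next
    case False
    have "\<forall>y\<in>set xs. y < t" using Cons.prems False by auto
    then have "conj_part xs t = 0" by (simp add: conj_part_def filter_empty_conv not_le)
    moreover have "(x#xs)!i < t" using Cons.prems False by (cases i) (auto simp: not_le, meson le_less_trans nth_mem)
    ultimately show ?thesis using False by (simp add: conj_Cons)
  qed
qed

lemma conj_le_length: "conj_part a t \<le> length a"
  by (simp add: conj_part_def)

lemma conj_one: "0 \<notin> set a \<Longrightarrow> conj_part a 1 = length a"
  by (induction a) (auto simp: conj_Cons)

lemma conj_antimono: "s \<le> t \<Longrightarrow> conj_part a t \<le> conj_part a s"
  by (induction a) (auto simp: conj_Cons)

lemma part_le_first: "is_partition a \<Longrightarrow> x \<in> set a \<Longrightarrow> x \<le> first_part a"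
  by (cases a) (auto simp: is_partition_def first_part_def)

lemma conj_zero_iff: "is_partition a \<Longrightarrow> 1 \<le> t \<Longrightarrow> (conj_part a t = 0 \<longleftrightarrow> first_part a < t)"
proof (cases a)
  case Nil assume "1 \<le> t" then show ?thesis using Nil by (auto simp: first_part_def) 
next
  case (Cons x xs)
  assume p: "is_partition a" and t: "1 \<le> t"
  have "\<forall>y\<in>set xs. y \<le> x" using p Cons by (auto simp: part_Cons)
  then have "x < t \<Longrightarrow> conj_part xs t = 0" by (auto simp: conj_part_def filter_empty_conv)
  then show ?thesis using Cons by (auto simp: conj_Cons first_part_def)
qed

lemma first_le_size: "first_part a \<le> size_part a"
  by (cases a) (auto simp: first_part_def size_part_def)

lemma part_eq:
  assumes "is_partition a" "is_partition b" "\<And>t. 1 \<le> t \<Longrightarrow> conj_part a t = conj_part b t"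
  shows "a = b"
proof -
  have z: "0 \<notin> set a" "0 \<notin> set b" and s: "sorted_wrt (\<ge>) a" "sorted_wrt (\<ge>) b"
    using assms by (auto simp: is_partition_def)
  have len: "length a = length b" using assms(3)[of 1] conj_one[OF z(1)] conj_one[OF z(2)] by simp
  show ?thesis
  proof (rule nth_equalityI[OF len])
    fix i assume i: "i < length a"
    have a1: "a!i \<ge> 1" using z(1) i by (metis less_one not_le nth_mem)
    have b1: "b!i \<ge> 1" using z(2) i len by (metis less_one not_le nth_mem)
    have "a!i \<le> b!i" using conj_nth[OF s(1) i, of "a!i"] conj_nth[OF s(2), of i "a!i"] i len assms(3)[OF a1] by simp
    moreover have "b!i \<le> a!i" using conj_nth[OF s(1) i, of "b!i"] conj_nth[OF s(2), of i "b!i"] i len assms(3)[OF b1] by simp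
    ultimately show "a!i = b!i" by simp
  qed
qed

lemma mult_conj: "mult_part a i = conj_part a i - conj_part a (Suc i)"
proof (induction a)
  case Nil then show ?case by (simp add: mult_part_def)
next
  case (Cons x xs)
  have "conj_part xs (Suc i) \<le> conj_part xs i" by (rule conj_antimono) simp
  then show ?case using Cons by (auto simp: mult_part_def conj_Cons)
qed

lemma size_conj: "\<forall>x\<in>set a. x \<le> K \<Longrightarrow> size_part a = (\<Sum>i\<in>{1..K}. conj_part a i)"
proof (induction a)
  case Nil then show ?case by (simp add: size_part_def)
next
  case (Cons x xs)
  have "(\<Sum>i\<in>{1..K}. (if i \<le> x then 1 else 0::nat)) = card ({1..K} \<inter> {i. i \<le> x})"
    by (simp add: sum.If_cases)
  also have "{1..K} \<inter> {i. i \<le> x} = {1..x}" using Cons.prems by auto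
  finally have "(\<Sum>i\<in>{1..K}. (if i \<le> x then 1 else 0::nat)) = x" by simp
  moreover have "(\<Sum>i\<in>{1..K}. conj_part (x#xs) i) = (\<Sum>i\<in>{1..K}. (if i \<le> x then 1 else 0::nat)) + (\<Sum>i\<in>{1..K}. conj_part xs i)"
    by (auto simp add: conj_Cons sum.distrib[symmetric] intro!: sum.cong)
  ultimately show ?case using Cons by (simp add: size_part_def)
qed

lemma conj_update: "c < length a \<Longrightarrow>
  conj_part (a[c:=v]) t + (if t \<le> a!c then 1 else 0) = conj_part a t + (if t \<le> v then 1 else 0)"
proof (induction a arbitrary: c)
  case Nil then show ?case by simp
next
  case (Cons x xs)
  then show ?case by (cases c) (auto simp: conj_Cons)
qed


definition valid_add :: "nat list \<Rightarrow> nat \<Rightarrow> bool" where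
  "valid_add a s \<longleftrightarrow> 1 \<le> s \<and> (s = 1 \<or> conj_part a s < conj_part a (s - 1))"

definition corner :: "nat list \<Rightarrow> nat \<Rightarrow> bool" where
  "corner a s \<longleftrightarrow> 1 \<le> s \<and> conj_part a (Suc s) < conj_part a s"

definition rem_box :: "nat list \<Rightarrow> nat \<Rightarrow> nat list" where
  "rem_box a s = (if s = 1 then butlast a else a[conj_part a s - 1 := s - 1])"

lemma update_sorted:
  assumes s: "sorted_wrt (\<ge>) a" and c: "c < length a"
    and lo: "\<And>i. i < c \<Longrightarrow> v \<le> a!i" and hi: "\<And>j. c < j \<Longrightarrow> j < length a \<Longrightarrow> a!j \<le> v"
  shows "sorted_wrt (\<ge>) (a[c:=v])"
  unfolding sorted_wrt_iff_nth_less
proof (intro allI impI)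
  fix i j assume ij: "i < j" "j < length (a[c:=v])"
  show "a[c:=v]!j \<le> a[c:=v]!i"
    using ij lo hi s c by (auto simp: nth_list_update sorted_wrt_iff_nth_less)
qed

lemma add_box_props:
  assumes p: "is_partition a" and v: "valid_add a s"
  shows "is_partition (add_box a s) \<and> (\<forall>t\<ge>1. conj_part (add_box a s) t = conj_part a t + (if t = s then 1 else 0))
     \<and> size_part (add_box a s) = size_part a + 1"
proof (cases "s = 1")
  case True
  have z: "0 \<notin> set a" and so: "sorted_wrt (\<ge>) a" using p by (auto simp: is_partition_def)
  have e: "add_box a s = a @ [1]" using True conj_one[OF z] by (simp add: add_box_def Let_def)
  have "is_partition (a @ [1])" using z so by (auto simp: is_partition_def sorted_wrt_append Suc_le_eq intro!: gr0I)
  then show ?thesis using e True by (auto simp: conj_app conj_Cons size_part_def)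
next
  case False
  have z: "0 \<notin> set a" and so: "sorted_wrt (\<ge>) a" using p by (auto simp: is_partition_def)
  have s2: "2 \<le> s" "conj_part a s < conj_part a (s - 1)" using False v by (auto simp: valid_add_def)
  define c where "c = conj_part a s"
  have cl: "c < length a" using s2 conj_le_length[of a "s - 1"] c_def by linarith
  have ac1: "s - 1 \<le> a!c" using conj_nth[OF so cl, of "s - 1"] s2 c_def by simp
  have ac2: "\<not> s \<le> a!c" using conj_nth[OF so cl, of s] c_def by simp
  have acs: "a!c = s - 1" using ac1 ac2 by simp
  have e: "add_box a s = a[c := s]" using cl acs s2 by (simp add: add_box_def Let_def c_def[symmetric])
  have sorted: "sorted_wrt (\<ge>) (a[c:=s])"
  proof (rule update_sorted[OF so cl])
    fix i assume "i < c" then show "s \<le> a!i" using conj_nth[OF so, of i s] cl c_def by simp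
  next
    fix j assume "c < j" "j < length a"
    then have "a!j \<le> a!c" using so by (auto simp: sorted_wrt_iff_nth_less)
    then show "a!j \<le> s" using acs by simp
  qed
  have pp: "is_partition (a[c:=s])" using sorted z s2 set_update_subset_insert[of a c s]
    by (auto simp: is_partition_def)
  have cj: "conj_part (a[c:=s]) t = conj_part a t + (if t = s then 1 else 0)" if "t \<ge> 1" for t
    using conj_update[OF cl, of s t] acs s2 by (auto split: if_splits)
  have "size_part (a[c:=s]) = size_part a + 1"
  proof -
    have "size_part (a[c:=s]) + (a!c) = size_part a + s" using cl
      by (induction a arbitrary: c) (auto simp: size_part_def split: nat.splits)
    then show ?thesis using acs s2 by simp
  qed
  then show ?thesis using e pp cj by simp
qed

lemma rem_box_props:
  assumes p: "is_partition a" and cn: "corner a s"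
  shows "is_partition (rem_box a s) \<and> (\<forall>t\<ge>1. conj_part (rem_box a s) t + (if t = s then 1 else 0) = conj_part a t)
     \<and> size_part (rem_box a s) + 1 = size_part a"
proof (cases "s = 1")
  case True
  have z: "0 \<notin> set a" and so: "sorted_wrt (\<ge>) a" using p by (auto simp: is_partition_def)
  have c12: "conj_part a 2 < conj_part a 1" using cn True by (simp add: corner_def numeral_2_eq_2)
  then have ne: "a \<noteq> []" by auto
  have l: "length a - 1 < length a" using ne by simp
  have "1 \<le> a!(length a - 1)" using conj_nth[OF so l, of 1] conj_one[OF z] ne by simp
  moreover have "\<not> 2 \<le> a!(length a - 1)" using conj_nth[OF so l, of 2] conj_one[OF z] c12 by simp
  ultimately have "last a = 1" using ne by (simp add: last_conv_nth)
  then have ae: "a = butlast a @ [1]" using ne by (metis append_butlast_last_id)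
  have e: "rem_box a s = butlast a" using True by (simp add: rem_box_def)
  have pb: "is_partition (butlast a)" using p ae
    by (metis is_partition_def Un_iff set_append sorted_wrt_append)
  have "conj_part a t = conj_part (butlast a) t + conj_part [1] t" for t
    using ae conj_app by metis
  moreover have "size_part a = size_part (butlast a) + 1" using ae
    by (metis size_part_def sum_list_append sum_list_simps(1) sum_list_simps(2) add.right_neutral)
  ultimately show ?thesis using e pb True by (auto simp: conj_Cons)
next
  case False
  have z: "0 \<notin> set a" and so: "sorted_wrt (\<ge>) a" using p by (auto simp: is_partition_def)
  have s2: "2 \<le> s" "conj_part a (Suc s) < conj_part a s" using False cn by (auto simp: corner_def)
  define c where "c = conj_part a s - 1"
  have cl: "c < length a" using s2 conj_le_length[of a s] c_def by linarith
  have ac1: "s \<le> a!c" using conj_nth[OF so cl, of s] s2 c_def by simp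
  have ac2: "\<not> Suc s \<le> a!c" using conj_nth[OF so cl, of "Suc s"] c_def s2 by simp
  have acs: "a!c = s" using ac1 ac2 by simp
  have e: "rem_box a s = a[c := s - 1]" using False by (simp add: rem_box_def c_def)
  have sorted: "sorted_wrt (\<ge>) (a[c:=s - 1])"
  proof (rule update_sorted[OF so cl])
    fix i assume "i < c" then have "a!c \<le> a!i" using so cl by (auto simp: sorted_wrt_iff_nth_less)
    then show "s - 1 \<le> a!i" using acs by simp
  next
    fix j assume "c < j" "j < length a"
    then have "\<not> s \<le> a!j" using conj_nth[OF so, of j s] c_def by simp
    then show "a!j \<le> s - 1" by simp
  qed
  have pp: "is_partition (a[c:=s - 1])" using sorted z s2 set_update_subset_insert[of a c "s - 1"]
    by (auto simp: is_partition_def)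
  have cj: "conj_part (a[c:=s - 1]) t + (if t = s then 1 else 0) = conj_part a t" if "t \<ge> 1" for t
    using conj_update[OF cl, of "s - 1" t] acs s2 by (auto split: if_splits)
  have "size_part (a[c:=s - 1]) + 1 = size_part a"
  proof -
    have "size_part (a[c:=s - 1]) + (a!c) = size_part a + (s - 1)" using cl
      by (induction a arbitrary: c) (auto simp: size_part_def split: nat.splits)
    then show ?thesis using acs s2 by simp
  qed
  then show ?thesis using e pp cj by simp
qed


lemma valid_bound: "is_partition a \<Longrightarrow> valid_add a s \<Longrightarrow> s \<le> first_part a + 1"
proof -
  assume p: "is_partition a" and v: "valid_add a s"
  show ?thesis
  proof (cases "s = 1")
    case False
    then have "conj_part a (s - 1) \<noteq> 0" "1 \<le> s - 1" using v by (auto simp: valid_add_def)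
    then show ?thesis using conj_zero_iff[OF p, of "s - 1"] by linarith
  qed simp
qed

lemma col_prob_invalid: "is_partition a \<Longrightarrow> 1 \<le> s \<Longrightarrow> \<not> valid_add a s \<Longrightarrow> col_prob q N a s = 0"
proof -
  assume "1 \<le> s" "\<not> valid_add a s"
  then have "s \<noteq> 1" "conj_part a (s - 1) \<le> conj_part a s" by (auto simp: valid_add_def)
  moreover have "conj_part a s \<le> conj_part a (s - 1)" by (rule conj_antimono) simp
  ultimately show ?thesis by (simp add: col_prob_def)
qed

lemma length_le_size: "0 \<notin> set xs \<Longrightarrow> length xs \<le> sum_list xs"
  by (induction xs) (auto simp: Suc_le_eq)

definition Pn :: "nat \<Rightarrow> nat list set" where "Pn n = {v. is_partition v \<and> size_part v = n}"
definition Ple :: "nat \<Rightarrow> nat list set" where "Ple n = {v. is_partition v \<and> size_part v \<le> n}"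

lemma finite_Ple: "finite (Ple n)"
proof (rule finite_subset)
  show "Ple n \<subseteq> {xs. set xs \<subseteq> {..n} \<and> length xs \<le> n}"
  proof
    fix xs assume "xs \<in> Ple n"
    then have "0 \<notin> set xs" "sum_list xs \<le> n" by (auto simp: Ple_def is_partition_def size_part_def)
    then show "xs \<in> {xs. set xs \<subseteq> {..n} \<and> length xs \<le> n}"
      using length_le_size[of xs] member_le_sum_list[of _ xs] by fastforce
  qed
  show "finite {xs. set xs \<subseteq> {..n} \<and> length xs \<le> n}" by (rule finite_lists_length_le) simp
qed

lemma finite_Pn: "finite (Pn n)"
  by (rule finite_subset[OF _ finite_Ple[of n]]) (auto simp: Pn_def Ple_def)

lemma hw_support: "is_partition mu \<Longrightarrow> heads_walk q u N k mu lam \<noteq> 0 \<Longrightarrow>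
    is_partition lam \<and> size_part lam = size_part mu + k"
proof (induction k arbitrary: mu)
  case 0 then show ?case by (auto split: if_splits)
next
  case (Suc k)
  have "(\<Sum>s\<in>{1..first_part mu + 1}. (u / q ^ N) * col_prob q N mu s * heads_walk q u N k (add_box mu s) lam) \<noteq> 0"
    using Suc.prems(2) heads_walk.simps(2) by metis
  then obtain s where s: "s \<in> {1..first_part mu + 1}"
    and nz: "(u / q ^ N) * col_prob q N mu s * heads_walk q u N k (add_box mu s) lam \<noteq> 0"
    by (meson sum.not_neutral_contains_not_neutral)
  have v: "valid_add mu s" using col_prob_invalid[OF Suc.prems(1)] s nz by fastforce
  have ab: "is_partition (add_box mu s)" "size_part (add_box mu s) = size_part mu + 1"
    using add_box_props[OF Suc.prems(1) v] by auto
  have "heads_walk q u N k (add_box mu s) lam \<noteq> 0" using nz by auto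
  from Suc.IH[OF ab(1) this] ab(2) show ?case by simp
qed

lemma hw_backward: "is_partition mu \<Longrightarrow>
  heads_walk q u N (Suc k) mu lam = (\<Sum>v\<in>Pn (size_part mu + k). heads_walk q u N k mu v * heads_walk q u N 1 v lam)"
proof (induction k arbitrary: mu)
  case 0
  have "(\<Sum>v\<in>Pn (size_part mu). heads_walk q u N 0 mu v * heads_walk q u N 1 v lam)
      = (\<Sum>v\<in>Pn (size_part mu). if v = mu then heads_walk q u N 1 v lam else 0)"
    by (rule sum.cong) auto
  also have "\<dots> = heads_walk q u N 1 mu lam" using 0 finite_Pn by (simp add: Pn_def)
  finally show ?case by simp
next
  case (Suc k)
  let ?w = "\<lambda>s. (u / q ^ N) * col_prob q N mu s"
  let ?S = "{1..first_part mu + 1}"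
  have "heads_walk q u N (Suc (Suc k)) mu lam = (\<Sum>s\<in>?S. ?w s * heads_walk q u N (Suc k) (add_box mu s) lam)"
    by simp
  also have "\<dots> = (\<Sum>s\<in>?S. ?w s * (\<Sum>v\<in>Pn (size_part mu + Suc k). heads_walk q u N k (add_box mu s) v * heads_walk q u N 1 v lam))"
  proof (rule sum.cong[OF refl])
    fix s assume s: "s \<in> ?S"
    show "?w s * heads_walk q u N (Suc k) (add_box mu s) lam = ?w s * (\<Sum>v\<in>Pn (size_part mu + Suc k). heads_walk q u N k (add_box mu s) v * heads_walk q u N 1 v lam)"
    proof (cases "valid_add mu s")
      case True
      have ab: "is_partition (add_box mu s)" "size_part (add_box mu s) = size_part mu + 1"
        using add_box_props[OF Suc.prems True] by auto
      show ?thesis using Suc.IH[OF ab(1)] ab(2) by simp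
    next
      case False
      then show ?thesis using col_prob_invalid[OF Suc.prems _ False] s by simp
    qed
  qed
  also have "\<dots> = (\<Sum>s\<in>?S. \<Sum>v\<in>Pn (size_part mu + Suc k). ?w s * heads_walk q u N k (add_box mu s) v * heads_walk q u N 1 v lam)"
    by (simp del: heads_walk.simps add: sum_distrib_left mult.assoc)
  also have "\<dots> = (\<Sum>v\<in>Pn (size_part mu + Suc k). \<Sum>s\<in>?S. ?w s * heads_walk q u N k (add_box mu s) v * heads_walk q u N 1 v lam)"
    by (rule sum.swap)
  also have "\<dots> = (\<Sum>v\<in>Pn (size_part mu + Suc k). (\<Sum>s\<in>?S. ?w s * heads_walk q u N k (add_box mu s) v) * heads_walk q u N 1 v lam)"
    by (simp only: sum_distrib_right)
  also have "\<dots> = (\<Sum>v\<in>Pn (size_part mu + Suc k). heads_walk q u N (Suc k) mu v * heads_walk q u N 1 v lam)"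
    by (simp only: heads_walk.simps(2))
  finally show ?case .
qed

lemma alg_PC0:
  fixes q u U AB X Y Qe Qd A B E R W D :: real
  assumes "q \<noteq> 0" "A \<noteq> 0" "B \<noteq> 0" "E \<noteq> 0" "R \<noteq> 0" "W \<noteq> 0" "Qe \<noteq> 0" "Qd \<noteq> 0"
    "q*E - 1 \<noteq> 0" "q*B - 1 \<noteq> 0" "D \<noteq> 0"
  shows "(U*AB*(X*(1/(Qe*((q*E-1)/(q*E))))*(1/Qd))*(Y*(1/W))) * ((u/(q*A*B*E*R)) * ((R*(q*E-1))/D))
   = (U*u*AB*(X*(1/Qe)*(1/(Qd*((q*B-1)/(q*B)))))*(Y*(1/(W*(A*B)*(A*B)*q)))) * (A*(q*B-1))/D"
  using assms by (simp add: field_simps)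

lemma alg_PC:
  fixes q u U AB X Y Qe Qd :: real and z d e r :: nat
  assumes q: "q > 1" and Qe: "Qe \<noteq> 0" and Qd: "Qd \<noteq> 0"
  shows "(U * AB * (X * (1 / (Qe * (1 - 1/q^(e+1)))) * (1 / Qd)) * (Y * (1 / q^((z+d)^2))))
          * ((u / q^(z+d+1+e+r)) * ((q^(r+e+1) - q^r) / (q^(z+d+1+e+r) - 1)))
       = (U * u * AB * (X * (1/Qe) * (1 / (Qd * (1 - 1/q^(d+1))))) * (Y * (1 / q^((z+d+1)^2))))
          * (q^(z+d+1) - q^z) / (q^(z+d+1+e+r) - 1)"
proof -
  have qp: "q > 0" using q by simp
  have h1: "(1 - 1/q^(e+1)) = (q*q^e - 1) / (q*q^e)" using qp by (simp add: field_simps)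
  have h2: "(1 - 1/q^(d+1)) = (q*q^d - 1) / (q*q^d)" using qp by (simp add: field_simps)
  have ne1: "q*q^e - 1 \<noteq> 0" using one_less_power[OF q, of "e+1"] by simp
  have ne2: "q*q^d - 1 \<noteq> 0" using one_less_power[OF q, of "d+1"] by simp
  have ne3: "q^(z+d+1+e+r) - 1 \<noteq> 0" using one_less_power[OF q, of "z+d+1+e+r"] by simp
  have sq: "q^((z+d+1)^2) = q^((z+d)^2) * (q^z*q^d) * (q^z*q^d) * q"
    by (simp add: power2_eq_square algebra_simps flip: power_add)
  have a1: "q^(r+e+1) - q^r = q^r * (q*q^e - 1)" by (simp add: algebra_simps flip: power_add)
  have a2: "q^(z+d+1) - q^z = q^z * (q*q^d - 1)" by (simp add: algebra_simps flip: power_add)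
  have a3: "q^(z+d+1+e+r) = q*q^z*q^d*q^e*q^r" by (simp add: algebra_simps flip: power_add)
  show ?thesis unfolding h1 h2 sq a1 a2 a3
    apply (rule alg_PC0)
    using qp Qe Qd ne1 ne2 ne3 a3 by auto
qed

lemma alg_LN1:
  fixes q T U A B Z Y Qr C Rr D1 D2 :: real
  assumes "q \<noteq> 0" "C \<noteq> 0" "Rr \<noteq> 0" "Qr \<noteq> 0" "D1 \<noteq> 0" "D2 \<noteq> 0"
  shows "T * (U*A*B*((1/Qr*Z)*Y))
    = (U*(A*T)*(B*(D2/(q*C*Rr)))*(((1/(Qr*(D1/(q*Rr))))*Z)*Y)) * (C * D1)/D2"
  using assms by (simp add: field_simps)

lemma alg_LN0:
  fixes q u U A B Z Y Qr C Rr :: real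
  assumes "q \<noteq> 0" "C \<noteq> 0" "Rr \<noteq> 0" "Qr \<noteq> 0" "q*Rr - 1 \<noteq> 0" "q*C*Rr - 1 \<noteq> 0"
  shows "(1 - u/(q*C*Rr)) * (U*A*B*((1/Qr*Z)*Y))
    = (U*(A*(1 - u/(q*C*Rr)))*(B*(1 - 1/(q*C*Rr)))*((1/(Qr*(1 - 1/(q*Rr)))*Z)*Y)) * (q*C*Rr - C)/(q*C*Rr - 1)"
proof -
  have e1: "1 - 1/(q*C*Rr) = (q*C*Rr - 1)/(q*C*Rr)" using assms by (simp add: field_simps)
  have e2: "1 - 1/(q*Rr) = (q*Rr - 1)/(q*Rr)" using assms by (simp add: field_simps)
  have e3: "q*C*Rr - C = C * (q*Rr - 1)" by (simp add: algebra_simps)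
  show ?thesis unfolding e1 e2 e3 by (rule alg_LN1[OF assms])
qed

definition Fq :: "real \<Rightarrow> real \<Rightarrow> nat \<Rightarrow> nat list \<Rightarrow> real" where
  "Fq q u N lam = (if length lam > N then 0
     else u ^ size_part lam * qpoch q (u / q) N * qpoch q (1 / q) N
            / qpoch q (1 / q) (N - conj_part lam 1)
          * (\<Prod>i\<in>{1..first_part lam}.
               1 / (q ^ ((conj_part lam i)\<^sup>2) * qpoch q (1 / q) (mult_part lam i))))"

definition cc :: "nat \<Rightarrow> nat list \<Rightarrow> nat \<Rightarrow> nat" where
  "cc N lam i = (if i = 0 then N else conj_part lam i)"

lemma qpoch_0[simp]: "qpoch q a 0 = 1" by (simp add: qpoch_def)
lemma qpoch_Suc: "qpoch q a (Suc m) = qpoch q a m * (1 - a / q ^ m)" by (simp add: qpoch_def)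
lemma qpoch_pos: "q \<ge> 1 \<Longrightarrow> a < 1 \<Longrightarrow> 0 < qpoch q a m"
  unfolding qpoch_def
proof (rule prod_pos)
  fix k assume q: "q \<ge> 1" and a: "a < 1"
  have qk: "1 \<le> q ^ k" using q by simp
  have "a / q ^ k < 1"
  proof (cases "a \<le> 0")
    case True then show ?thesis using qk by (smt (verit) divide_nonpos_pos)
  next
    case False then have "a / q ^ k \<le> a" using qk by (simp add: divide_le_eq mult_le_cancel_left1)
    then show ?thesis using a by simp
  qed
  then show "0 < 1 - a / q ^ k" by simp
qed

lemma F_alt:
  assumes p: "is_partition lam" and K: "first_part lam \<le> K"
  shows "Fq q u N lam = (if N < conj_part lam 1 then 0 else u ^ size_part lam * qpoch q (u/q) N * qpoch q (1/q) N
     * ((\<Prod>i\<in>{0..K}. 1 / qpoch q (1/q) (cc N lam i - cc N lam (Suc i)))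
        * (\<Prod>i\<in>{1..K}. 1 / q ^ ((conj_part lam i)^2))))"
proof -
  have z: "0 \<notin> set lam" using p by (simp add: is_partition_def)
  have len: "length lam = conj_part lam 1" using conj_one[OF z] by simp
  have "(\<Prod>i\<in>{1..first_part lam}. 1 / (q ^ ((conj_part lam i)\<^sup>2) * qpoch q (1 / q) (mult_part lam i)))
     = (\<Prod>i\<in>{1..first_part lam}. 1 / (q ^ ((conj_part lam i)\<^sup>2) * qpoch q (1 / q) (conj_part lam i - conj_part lam (Suc i))))"
    by (simp add: mult_conj)
  also have "\<dots> = (\<Prod>i\<in>{1..K}. 1 / (q ^ ((conj_part lam i)\<^sup>2) * qpoch q (1 / q) (conj_part lam i - conj_part lam (Suc i))))"
  proof (rule prod.mono_neutral_left)
    show "\<forall>i\<in>{1..K} - {1..first_part lam}. 1 / (q ^ ((conj_part lam i)\<^sup>2) * qpoch q (1 / q) (conj_part lam i - conj_part lam (Suc i))) = 1"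
    proof
      fix i assume "i \<in> {1..K} - {1..first_part lam}"
      then have "1 \<le> i" "first_part lam < i" by auto
      then have "conj_part lam i = 0" "conj_part lam (Suc i) = 0" using conj_zero_iff[OF p] by auto
      then show "1 / (q ^ ((conj_part lam i)\<^sup>2) * qpoch q (1 / q) (conj_part lam i - conj_part lam (Suc i))) = 1" by simp
    qed
  qed (use K in auto)
  also have "\<dots> = (\<Prod>i\<in>{1..K}. 1 / qpoch q (1 / q) (conj_part lam i - conj_part lam (Suc i)) * (1 / q ^ ((conj_part lam i)\<^sup>2)))"
    by (rule prod.cong) auto
  also have "\<dots> = (\<Prod>i\<in>{1..K}. 1 / qpoch q (1 / q) (conj_part lam i - conj_part lam (Suc i))) * (\<Prod>i\<in>{1..K}. 1 / q ^ ((conj_part lam i)\<^sup>2))"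
    by (rule prod.distrib)
  finally have e1: "(\<Prod>i\<in>{1..first_part lam}. 1 / (q ^ ((conj_part lam i)\<^sup>2) * qpoch q (1 / q) (mult_part lam i)))
     = (\<Prod>i\<in>{1..K}. 1 / qpoch q (1 / q) (conj_part lam i - conj_part lam (Suc i))) * (\<Prod>i\<in>{1..K}. 1 / q ^ ((conj_part lam i)\<^sup>2))" .
  have "(\<Prod>i\<in>{0..K}. 1 / qpoch q (1/q) (cc N lam i - cc N lam (Suc i)))
     = 1 / qpoch q (1/q) (cc N lam 0 - cc N lam 1) * (\<Prod>i\<in>{Suc 0..K}. 1 / qpoch q (1/q) (cc N lam i - cc N lam (Suc i)))"
    by (subst prod.atLeast_Suc_atMost) simp_all
  also have "(\<Prod>i\<in>{Suc 0..K}. 1 / qpoch q (1/q) (cc N lam i - cc N lam (Suc i)))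
     = (\<Prod>i\<in>{1..K}. 1 / qpoch q (1 / q) (conj_part lam i - conj_part lam (Suc i)))"
    by (rule prod.cong) (auto simp: cc_def)
  finally have e2: "(\<Prod>i\<in>{0..K}. 1 / qpoch q (1/q) (cc N lam i - cc N lam (Suc i)))
     = 1 / qpoch q (1/q) (N - conj_part lam 1) * (\<Prod>i\<in>{1..K}. 1 / qpoch q (1 / q) (conj_part lam i - conj_part lam (Suc i)))"
    by (simp add: cc_def)
  show ?thesis unfolding Fq_def len e1 e2 by simp
qed



lemma prod_split2: "finite I \<Longrightarrow> a \<in> I \<Longrightarrow> b \<in> I \<Longrightarrow> a \<noteq> b \<Longrightarrow> prod f I = f a * f b * prod f (I - {a,b})"
proof -
  assume f: "finite I" and ab: "a \<in> I" "b \<in> I" "a \<noteq> b"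
  have "prod f I = f a * prod f (I - {a})" using f ab by (simp add: prod.remove)
  also have "prod f (I - {a}) = f b * prod f (I - {a} - {b})" using f ab by (simp add: prod.remove)
  also have "I - {a} - {b} = I - {a,b}" by auto
  finally show ?thesis by (simp add: mult.assoc)
qed

lemma powi_nat: "c \<le> M \<Longrightarrow> (q::real) powi (int M - int c) = q ^ (M - c)"
  by (simp add: power_int_def nat_diff_distrib)

lemma LN:
  assumes p: "is_partition lam" and q: "q > 1"
  shows "(1 - u/q^(Suc N)) * Fq q u N lam = Fq q u (Suc N) lam * (q^(Suc N) - q^(conj_part lam 1)) / (q^(Suc N) - 1)"
proof -
  define K where "K = first_part lam"
  define c1 where "c1 = conj_part lam 1"
  have FN: "Fq q u N lam = (if N < c1 then 0 else u ^ size_part lam * qpoch q (u/q) N * qpoch q (1/q) N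
     * ((\<Prod>i\<in>{0..K}. 1 / qpoch q (1/q) (cc N lam i - cc N lam (Suc i)))
        * (\<Prod>i\<in>{1..K}. 1 / q ^ ((conj_part lam i)^2))))" using F_alt[OF p, of K] K_def c1_def by simp
  have FM: "Fq q u (Suc N) lam = (if Suc N < c1 then 0 else u ^ size_part lam * qpoch q (u/q) (Suc N) * qpoch q (1/q) (Suc N)
     * ((\<Prod>i\<in>{0..K}. 1 / qpoch q (1/q) (cc (Suc N) lam i - cc (Suc N) lam (Suc i)))
        * (\<Prod>i\<in>{1..K}. 1 / q ^ ((conj_part lam i)^2))))" using F_alt[OF p, of K] K_def c1_def by simp
  have split: "(\<Prod>i\<in>{0..K}. 1 / qpoch q (1/q) (cc M lam i - cc M lam (Suc i)))
     = 1 / qpoch q (1/q) (M - c1) * (\<Prod>i\<in>{Suc 0..K}. 1 / qpoch q (1/q) (cc N lam i - cc N lam (Suc i)))" for M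
  proof -
    have "(\<Prod>i\<in>{0..K}. 1 / qpoch q (1/q) (cc M lam i - cc M lam (Suc i)))
      = 1 / qpoch q (1/q) (cc M lam 0 - cc M lam (Suc 0)) * (\<Prod>i\<in>{Suc 0..K}. 1 / qpoch q (1/q) (cc M lam i - cc M lam (Suc i)))"
      by (subst prod.atLeast_Suc_atMost) simp_all
    also have "(\<Prod>i\<in>{Suc 0..K}. 1 / qpoch q (1/q) (cc M lam i - cc M lam (Suc i)))
       = (\<Prod>i\<in>{Suc 0..K}. 1 / qpoch q (1/q) (cc N lam i - cc N lam (Suc i)))"
      by (rule prod.cong) (auto simp: cc_def)
    finally show ?thesis by (simp add: cc_def c1_def)
  qed
  show ?thesis
  proof (cases "N < c1")
    case True
    show ?thesis
    proof (cases "Suc N < c1")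
      case True then show ?thesis using FN FM by simp
    next
      case False then have "c1 = Suc N" using \<open>N < c1\<close> by simp
      then show ?thesis using FN c1_def by simp
    qed
  next
    case False
    then obtain r where r: "N = c1 + r" using le_Suc_ex not_less by blast
    define U where "U = u ^ size_part lam"
    define A where "A = qpoch q (u/q) N"
    define B where "B = qpoch q (1/q) N"
    define Z where "Z = (\<Prod>i\<in>{Suc 0..K}. 1 / qpoch q (1/q) (cc N lam i - cc N lam (Suc i)))"
    define Y where "Y = (\<Prod>i\<in>{1..K}. 1 / q ^ ((conj_part lam i)^2))"
    define Qr where "Qr = qpoch q (1/q) r"
    define C where "C = q ^ c1"
    define Rr where "Rr = q ^ r"
    have qN: "q^N = C * Rr" by (simp add: C_def Rr_def r power_add)
    have e1: "Fq q u N lam = U*A*B*((1/Qr*Z)*Y)" using FN False split[of N]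
      by (simp add: U_def A_def B_def Z_def Y_def Qr_def r)
    have e2: "Fq q u (Suc N) lam = U*(A*(1 - u/(q*C*Rr)))*(B*(1 - 1/(q*C*Rr)))*((1/(Qr*(1 - 1/(q*Rr)))*Z)*Y)"
      using FM False split[of "Suc N"] qN
      by (simp add: U_def A_def B_def Z_def Y_def Qr_def r qpoch_Suc Suc_diff_le Rr_def mult.assoc)
    have qp: "q \<noteq> 0" "C \<noteq> 0" "Rr \<noteq> 0" using q by (auto simp: C_def Rr_def)
    have Qp: "Qr \<noteq> 0" using qpoch_pos[of q "1/q" r] q by (simp add: Qr_def)
    have n1: "q*Rr - 1 \<noteq> 0" using one_less_power[OF q, of "Suc r"] by (simp add: Rr_def)
    have n2: "q*C*Rr - 1 \<noteq> 0" using one_less_power[OF q, of "Suc N"] qN by (simp add: mult.assoc)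
    have qM: "q^(Suc N) = q*C*Rr" using qN by (simp add: mult.assoc)
    show ?thesis unfolding e1 e2 c1_def[symmetric] C_def[symmetric] qM
      by (rule alg_LN0[OF qp Qp n1 n2, of u U A B Z Y])
  qed
qed


lemma corner_le_first: "is_partition a \<Longrightarrow> corner a s \<Longrightarrow> s \<le> first_part a"
  using conj_zero_iff[of a s] by (fastforce simp: corner_def)

lemma PC:
  assumes p: "is_partition lam" and cn: "corner lam s" and q: "q > 1" and M: "0 < M"
  shows "Fq q u M (rem_box lam s) * ((u / q^M) * col_prob q M (rem_box lam s) s)
       = Fq q u M lam * (q^(conj_part lam s) - q^(conj_part lam (Suc s))) / (q^M - 1)"
proof -
  define v where "v = rem_box lam s"
  have pv: "is_partition v" and cv: "\<And>t. 1 \<le> t \<Longrightarrow> conj_part v t + (if t = s then 1 else 0) = conj_part lam t"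
    and sv: "size_part v + 1 = size_part lam"
    using rem_box_props[OF p cn] v_def by auto
  have s1: "1 \<le> s" using cn by (simp add: corner_def)
  have sK: "s \<le> first_part lam" using corner_le_first[OF p cn] .
  define K where "K = first_part lam + 1"
  have Kl: "first_part lam \<le> K" by (simp add: K_def)
  have Kv: "first_part v \<le> K"
  proof -
    have "conj_part lam K = 0" using conj_zero_iff[OF p, of K] K_def by simp
    then have "conj_part v K = 0" using cv[of K] by (simp add: K_def)
    then show ?thesis using conj_zero_iff[OF pv, of K] K_def by simp
  qed
  define c1 where "c1 = conj_part lam 1"
  have cv1: "conj_part v 1 \<le> c1" using cv[of 1] c1_def by simp
  show ?thesis
  proof (cases "M < c1")
    case True
    have FM: "Fq q u M lam = 0" using F_alt[OF p Kl] True c1_def by simp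
    have "Fq q u M v * ((u / q^M) * col_prob q M v s) = 0"
    proof (cases "M < conj_part v 1")
      case True then show ?thesis using F_alt[OF pv Kv] by simp
    next
      case False
      then have "s = 1" "conj_part v 1 = M" using cv[of 1] \<open>M < c1\<close> c1_def by (auto split: if_splits)
      then show ?thesis by (simp add: col_prob_def)
    qed
    then show ?thesis using FM v_def by simp
  next
    case False
    then have Mc: "c1 \<le> M" by simp
    define x where "x = cc M lam (s - 1)"
    define y where "y = conj_part lam s"
    define z where "z = conj_part lam (Suc s)"
    have zy: "z < y" using cn by (simp add: corner_def y_def z_def)
    have yx: "y \<le> x"
    proof (cases "s = 1")
      case True then show ?thesis using Mc by (simp add: x_def y_def cc_def c1_def)
    next
      case False then show ?thesis using s1 by (simp add: x_def y_def cc_def conj_antimono)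
    qed
    have xM: "x \<le> M"
    proof (cases "s = 1")
      case True then show ?thesis by (simp add: x_def cc_def)
    next
      case False
      have "conj_part lam (s - 1) \<le> conj_part lam 1" using False s1 by (simp add: conj_antimono)
      then show ?thesis using False s1 Mc c1_def by (simp add: x_def cc_def)
    qed
    obtain d where d: "y = z + d + 1" using zy by (metis add.commute add_Suc_right less_imp_Suc_add plus_1_eq_Suc)
    obtain e where e: "x = y + e" using yx le_Suc_ex by blast
    obtain r where r: "M = x + r" using xM le_Suc_ex by blast
    have ccv: "cc M v i = (if i = s then y - 1 else cc M lam i)" for i
      using cv[of i] s1 by (auto simp: cc_def y_def)
    let ?I = "{0..K}"
    have sI: "s - 1 \<in> ?I" "s \<in> ?I" "s - 1 \<noteq> s" using sK s1 by (auto simp: K_def)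
    define X where "X = (\<Prod>i\<in>?I - {s - 1, s}. 1 / qpoch q (1/q) (cc M lam i - cc M lam (Suc i)))"
    have PL: "(\<Prod>i\<in>?I. 1 / qpoch q (1/q) (cc M lam i - cc M lam (Suc i)))
       = 1 / qpoch q (1/q) e * (1 / qpoch q (1/q) (d+1)) * X"
    proof -
      have "cc M lam (s - 1) = x" "cc M lam s = y" "cc M lam (Suc (s - 1)) = y" "cc M lam (Suc s) = z"
        using s1 by (auto simp: x_def y_def z_def cc_def)
      then show ?thesis
        using prod_split2[OF _ sI, of "\<lambda>i. 1 / qpoch q (1/q) (cc M lam i - cc M lam (Suc i))"] e d
        by (simp add: X_def)
    qed
    have PV: "(\<Prod>i\<in>?I. 1 / qpoch q (1/q) (cc M v i - cc M v (Suc i)))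
       = 1 / qpoch q (1/q) (e+1) * (1 / qpoch q (1/q) d) * X"
    proof -
      have "(\<Prod>i\<in>?I - {s - 1, s}. 1 / qpoch q (1/q) (cc M v i - cc M v (Suc i))) = X"
        unfolding X_def by (rule prod.cong) (auto simp: ccv)
      moreover have "cc M v (s - 1) = x" "cc M v s = y - 1" "cc M v (Suc (s - 1)) = y - 1" "cc M v (Suc s) = z"
        unfolding ccv using s1 by (simp_all add: x_def z_def cc_def, arith)
      ultimately show ?thesis
        using prod_split2[OF _ sI, of "\<lambda>i. 1 / qpoch q (1/q) (cc M v i - cc M v (Suc i))"] e d
        by simp
    qed
    define Y where "Y = (\<Prod>i\<in>{1..K} - {s}. 1 / q ^ ((conj_part lam i)^2))"
    have sI1: "s \<in> {1..K}" using sK s1 by (auto simp: K_def)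
    have YL: "(\<Prod>i\<in>{1..K}. 1 / q ^ ((conj_part lam i)^2)) = Y * (1 / q^((z+d+1)^2))"
      using prod.remove[OF _ sI1, of "\<lambda>i. 1 / q ^ ((conj_part lam i)^2)"] d
      by (simp add: Y_def y_def[symmetric] mult.commute)
    have YV: "(\<Prod>i\<in>{1..K}. 1 / q ^ ((conj_part v i)^2)) = Y * (1 / q^((z+d)^2))"
    proof -
      have "(\<Prod>i\<in>{1..K} - {s}. 1 / q ^ ((conj_part v i)^2)) = Y"
      proof (unfold Y_def, rule prod.cong)
        fix i assume "i \<in> {1..K} - {s}"
        then have "conj_part v i = conj_part lam i" using cv[of i] by auto
        then show "1 / q ^ (conj_part v i)\<^sup>2 = 1 / q ^ (conj_part lam i)\<^sup>2" by simp
      qed simp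
      moreover have "conj_part v s = z + d" using cv[OF s1] d y_def by simp
      ultimately show ?thesis
        using prod.remove[OF _ sI1, of "\<lambda>i. 1 / q ^ ((conj_part v i)^2)"]
        by (simp add: mult.commute)
    qed
    have col: "col_prob q M v s = (q^(r+e+1) - q^r) / (q^(z+d+1+e+r) - 1)"
    proof (cases "s = 1")
      case True
      have "conj_part v 1 = y - 1" using cv[of 1] True y_def by simp
      moreover have "r = 0" using True r by (simp add: x_def cc_def)
      ultimately show ?thesis using True d e r powi_nat[of "y - 1" M q]
        by (simp add: col_prob_def)
    next
      case False
      have "conj_part v s = y - 1" using cv[OF s1] y_def by simp
      moreover have "conj_part v (s - 1) = x"
      proof -
        have "1 \<le> s - 1" "s - 1 \<noteq> s" using False s1 by auto
        then show ?thesis using cv[of "s - 1"] False by (simp add: x_def cc_def) arith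
      qed
      ultimately show ?thesis using False d e r powi_nat[of "y - 1" M q] powi_nat[of x M q]
        by (simp add: col_prob_def add.commute)
    qed
    define U where "U = u ^ size_part v"
    define AB where "AB = qpoch q (u/q) M * qpoch q (1/q) M"
    have FL: "Fq q u M lam = U * u * AB * (X * (1 / qpoch q (1/q) e) * (1 / (qpoch q (1/q) d * (1 - 1/q^(d+1))))) * (Y * (1 / q^((z+d+1)^2)))"
    proof -
      have ul: "u ^ size_part lam = U * u" using sv[symmetric] by (simp add: U_def)
      show ?thesis using F_alt[OF p Kl, of q u M] Mc c1_def PL YL unfolding ul
        by (simp add: AB_def qpoch_Suc mult_ac)
    qed
    have FV: "Fq q u M v = U * AB * (X * (1 / (qpoch q (1/q) e * (1 - 1/q^(e+1)))) * (1 / qpoch q (1/q) d)) * (Y * (1 / q^((z+d)^2)))"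
      using F_alt[OF pv Kv, of q u M] Mc cv1 c1_def PV YV
      by (simp add: U_def AB_def qpoch_Suc mult_ac)
    have Qe: "qpoch q (1/q) e \<noteq> 0" "qpoch q (1/q) d \<noteq> 0" using qpoch_pos[of q "1/q" e] qpoch_pos[of q "1/q" d] q by auto
    have Me: "M = z+d+1+e+r" using r e d by simp
    have G: "conj_part lam s = z+d+1" "conj_part lam (Suc s) = z" using d by (simp_all add: y_def[symmetric] z_def)
    show ?thesis unfolding v_def[symmetric] FL FV col G unfolding Me
      by (rule alg_PC[OF q Qe, where U=U and AB=AB and X=X and Y=Y and u=u and z=z and d=d and e=e and r=r])
  qed
qed


lemma EQV:
  assumes pl: "is_partition lam" and pv: "is_partition v"
  shows "(valid_add v s \<and> add_box v s = lam) \<longleftrightarrow> (corner lam s \<and> v = rem_box lam s)"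
proof
  assume h: "valid_add v s \<and> add_box v s = lam"
  then have ca: "\<And>t. 1 \<le> t \<Longrightarrow> conj_part lam t = conj_part v t + (if t = s then 1 else 0)"
    using add_box_props[OF pv] by blast
  have s1: "1 \<le> s" using h by (simp add: valid_add_def)
  have "conj_part v (Suc s) \<le> conj_part v s" by (rule conj_antimono) simp
  then have cn: "corner lam s" using ca[of "Suc s"] ca[OF s1] s1 by (simp add: corner_def)
  have "is_partition (rem_box lam s)" and cr: "\<And>t. 1 \<le> t \<Longrightarrow> conj_part (rem_box lam s) t + (if t = s then 1 else 0) = conj_part lam t"
    using rem_box_props[OF pl cn] by auto
  moreover have "v = rem_box lam s"
    by (rule part_eq[OF pv \<open>is_partition (rem_box lam s)\<close>]) (use ca cr in fastforce)
  ultimately show "corner lam s \<and> v = rem_box lam s" using cn by simp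
next
  assume h: "corner lam s \<and> v = rem_box lam s"
  then have cn: "corner lam s" and vd: "v = rem_box lam s" by auto
  have cr: "\<And>t. 1 \<le> t \<Longrightarrow> conj_part v t + (if t = s then 1 else 0) = conj_part lam t"
    using rem_box_props[OF pl cn] vd by auto
  have s1: "1 \<le> s" using cn by (simp add: corner_def)
  have va: "valid_add v s"
  proof (cases "s = 1")
    case False
    have "conj_part lam s \<le> conj_part lam (s - 1)" by (rule conj_antimono) simp
    moreover have "conj_part v (s - 1) = conj_part lam (s - 1)"
    proof -
      have "1 \<le> s - 1" "s - 1 \<noteq> s" using False s1 by auto
      then show ?thesis using cr[of "s - 1"] by simp
    qed
    moreover have "conj_part v s + 1 = conj_part lam s" using cr[OF s1] by simp
    ultimately show ?thesis using s1 by (simp add: valid_add_def)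
  qed (simp add: valid_add_def)
  have pa: "is_partition (add_box v s)" and ca: "\<And>t. 1 \<le> t \<Longrightarrow> conj_part (add_box v s) t = conj_part v t + (if t = s then 1 else 0)"
    using add_box_props[OF pv va] by auto
  have "add_box v s = lam" by (rule part_eq[OF pa pl]) (use ca cr in fastforce)
  then show "valid_add v s \<and> add_box v s = lam" using va by simp
qed

lemma alg_sum: "(D::real) \<noteq> 0 \<Longrightarrow> F = F*((D+1) - C)/D + F/D*(C-1)"
  by (simp add: field_simps)

lemma tele: "(\<Sum>s\<in>{1..m}. (f s - f (Suc s) :: real)) = f 1 - f (Suc m)"
  by (induction m) (auto simp: sum.cl_ivl_Suc)

lemma KI:
  assumes p: "is_partition lam" and sz: "size_part lam = Suc n" and q: "q > 1"
  shows "Fq q u (Suc N) lam = (1 - u/q^(Suc N)) * Fq q u N lam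
     + (\<Sum>v\<in>Pn n. Fq q u (Suc N) v * heads_walk q u (Suc N) 1 v lam)"
proof -
  define M where "M = Suc N"
  define a where "a = u / q ^ M"
  define G where "G = (\<lambda>v s. Fq q u M v * (a * col_prob q M v s))"
  have step1: "Fq q u M v * heads_walk q u M 1 v lam
      = (\<Sum>s\<in>{1..Suc n}. if valid_add v s \<and> add_box v s = lam then G v s else 0)" if v: "v \<in> Pn n" for v
  proof -
    have pv: "is_partition v" and sv: "size_part v = n" using v by (auto simp: Pn_def)
    have hw1: "heads_walk q u M 1 v lam = (\<Sum>s\<in>{1..first_part v + 1}. a * col_prob q M v s * (if add_box v s = lam then 1 else 0))"
      by (simp only: One_nat_def heads_walk.simps a_def mult_1_right)
    have "Fq q u M v * heads_walk q u M 1 v lam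
        = (\<Sum>s\<in>{1..first_part v + 1}. if add_box v s = lam then G v s else 0)"
      unfolding hw1 sum_distrib_left by (rule sum.cong) (auto simp: G_def)
    also have "\<dots> = (\<Sum>s\<in>{1..first_part v + 1}. if valid_add v s \<and> add_box v s = lam then G v s else 0)"
    proof (rule sum.cong[OF refl])
      fix s assume "s \<in> {1..first_part v + 1}"
      then have "1 \<le> s" by simp
      then show "(if add_box v s = lam then G v s else 0) = (if valid_add v s \<and> add_box v s = lam then G v s else 0)"
        using col_prob_invalid[OF pv, of s q M] by (auto simp: G_def)
    qed
    also have "\<dots> = (\<Sum>s\<in>{1..Suc n}. if valid_add v s \<and> add_box v s = lam then G v s else 0)"
    proof (rule sum.mono_neutral_left)
      show "{1..first_part v + 1} \<subseteq> {1..Suc n}" using first_le_size[of v] sv by auto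
      show "\<forall>s\<in>{1..Suc n} - {1..first_part v + 1}. (if valid_add v s \<and> add_box v s = lam then G v s else 0) = 0"
        using valid_bound[OF pv] by fastforce
    qed simp
    finally show ?thesis .
  qed
  have step3: "(\<Sum>v\<in>Pn n. if valid_add v s \<and> add_box v s = lam then G v s else 0)
      = (if corner lam s then G (rem_box lam s) s else 0)" for s
  proof -
    have "(\<Sum>v\<in>Pn n. if valid_add v s \<and> add_box v s = lam then G v s else 0)
        = (\<Sum>v\<in>Pn n. if corner lam s \<and> v = rem_box lam s then G v s else 0)"
      by (rule sum.cong[OF refl]) (use EQV[OF p] in \<open>auto simp: Pn_def\<close>)
    also have "\<dots> = (if corner lam s then G (rem_box lam s) s else 0)"
    proof (cases "corner lam s")
      case True
      have "rem_box lam s \<in> Pn n" using rem_box_props[OF p True] sz by (auto simp: Pn_def)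
      then show ?thesis using True finite_Pn[of n] by (simp add: sum.delta')
    qed simp
    finally show ?thesis .
  qed
  have step4: "(if corner lam s then G (rem_box lam s) s else 0)
      = Fq q u M lam * (q^(conj_part lam s) - q^(conj_part lam (Suc s))) / (q^M - 1)" if s: "s \<in> {1..Suc n}" for s
  proof (cases "corner lam s")
    case True
    then show ?thesis using PC[OF p True q, of M u] by (simp add: G_def a_def M_def)
  next
    case False
    have "conj_part lam (Suc s) \<le> conj_part lam s" by (rule conj_antimono) simp
    then have "conj_part lam (Suc s) = conj_part lam s" using False s by (simp add: corner_def)
    then show ?thesis using False by simp
  qed
  have "(\<Sum>v\<in>Pn n. Fq q u M v * heads_walk q u M 1 v lam)
      = (\<Sum>v\<in>Pn n. \<Sum>s\<in>{1..Suc n}. if valid_add v s \<and> add_box v s = lam then G v s else 0)"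
    by (rule sum.cong[OF refl]) (rule step1)
  also have "\<dots> = (\<Sum>s\<in>{1..Suc n}. \<Sum>v\<in>Pn n. if valid_add v s \<and> add_box v s = lam then G v s else 0)"
    by (rule sum.swap)
  also have "\<dots> = (\<Sum>s\<in>{1..Suc n}. Fq q u M lam * (q^(conj_part lam s) - q^(conj_part lam (Suc s))) / (q^M - 1))"
    by (rule sum.cong[OF refl]) (simp add: step3 step4)
  also have "\<dots> = Fq q u M lam / (q^M - 1) * (\<Sum>s\<in>{1..Suc n}. q^(conj_part lam s) - q^(conj_part lam (Suc s)))"
    unfolding sum_distrib_left by (rule sum.cong) auto
  also have "\<dots> = Fq q u M lam / (q^M - 1) * (q^(conj_part lam 1) - 1)"
  proof -
    have "conj_part lam (Suc (Suc n)) = 0" using conj_zero_iff[OF p, of "Suc (Suc n)"] first_le_size[of lam] sz by simp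
    then show ?thesis using tele[of "\<lambda>s. q^(conj_part lam s)" "Suc n"] by simp
  qed
  finally have S: "(\<Sum>v\<in>Pn n. Fq q u M v * heads_walk q u M 1 v lam) = Fq q u M lam / (q^M - 1) * (q^(conj_part lam 1) - 1)" .
  have L: "(1 - a) * Fq q u N lam = Fq q u M lam * (q^M - q^(conj_part lam 1)) / (q^M - 1)"
    using LN[OF p q, of u N] by (simp add: a_def M_def)
  have ne: "q^M - 1 \<noteq> 0" using one_less_power[OF q, of M] by (simp add: M_def)
  have "Fq q u M lam = Fq q u M lam * (q^M - q^(conj_part lam 1)) / (q^M - 1) + Fq q u M lam / (q^M - 1) * (q^(conj_part lam 1) - 1)"
    using alg_sum[OF ne, of "Fq q u M lam" "q^(conj_part lam 1)"] by simp
  then show ?thesis using S L by (simp add: M_def a_def)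
qed


definition Wf :: "real \<Rightarrow> real \<Rightarrow> nat \<Rightarrow> nat list \<Rightarrow> real" where
  "Wf q u N lam = (\<Sum>mu\<in>Ple (size_part lam). Fq q u N mu * heads_walk q u (Suc N) (size_part lam - size_part mu) mu lam)"

lemma Wrec:
  assumes p: "is_partition lam" and sz: "size_part lam = Suc n"
  shows "Wf q u N lam = Fq q u N lam + (\<Sum>v\<in>Pn n. Wf q u N v * heads_walk q u (Suc N) 1 v lam)"
proof -
  let ?h = "heads_walk q u (Suc N)"
  have split: "Ple (Suc n) = Pn (Suc n) \<union> Ple n" by (auto simp: Ple_def Pn_def)
  have disj: "Pn (Suc n) \<inter> Ple n = {}" by (auto simp: Ple_def Pn_def)
  have A: "(\<Sum>mu\<in>Pn (Suc n). Fq q u N mu * ?h (Suc n - size_part mu) mu lam) = Fq q u N lam"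
  proof -
    have "(\<Sum>mu\<in>Pn (Suc n). Fq q u N mu * ?h (Suc n - size_part mu) mu lam)
       = (\<Sum>mu\<in>Pn (Suc n). if mu = lam then Fq q u N mu else 0)"
      by (rule sum.cong) (auto simp: Pn_def)
    also have "\<dots> = Fq q u N lam" using p sz finite_Pn[of "Suc n"] by (simp add: Pn_def)
    finally show ?thesis .
  qed
  have B: "(\<Sum>mu\<in>Ple n. Fq q u N mu * ?h (Suc n - size_part mu) mu lam)
      = (\<Sum>v\<in>Pn n. Wf q u N v * ?h 1 v lam)"
  proof -
    have "(\<Sum>mu\<in>Ple n. Fq q u N mu * ?h (Suc n - size_part mu) mu lam)
        = (\<Sum>mu\<in>Ple n. Fq q u N mu * (\<Sum>v\<in>Pn n. ?h (n - size_part mu) mu v * ?h 1 v lam))"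
    proof (rule sum.cong[OF refl])
      fix mu assume "mu \<in> Ple n"
      then have pm: "is_partition mu" and sm: "size_part mu \<le> n" by (auto simp: Ple_def)
      have "Suc n - size_part mu = Suc (n - size_part mu)" using sm by simp
      then show "Fq q u N mu * ?h (Suc n - size_part mu) mu lam = Fq q u N mu * (\<Sum>v\<in>Pn n. ?h (n - size_part mu) mu v * ?h 1 v lam)"
        using hw_backward[OF pm, of q u "Suc N" "n - size_part mu" lam] sm by simp
    qed
    also have "\<dots> = (\<Sum>mu\<in>Ple n. \<Sum>v\<in>Pn n. Fq q u N mu * ?h (n - size_part mu) mu v * ?h 1 v lam)"
      by (simp only: sum_distrib_left mult.assoc)
    also have "\<dots> = (\<Sum>v\<in>Pn n. \<Sum>mu\<in>Ple n. Fq q u N mu * ?h (n - size_part mu) mu v * ?h 1 v lam)"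
      by (rule sum.swap)
    also have "\<dots> = (\<Sum>v\<in>Pn n. Wf q u N v * ?h 1 v lam)"
    proof (rule sum.cong[OF refl])
      fix v assume "v \<in> Pn n"
      then have "size_part v = n" by (simp add: Pn_def)
      then show "(\<Sum>mu\<in>Ple n. Fq q u N mu * ?h (n - size_part mu) mu v * ?h 1 v lam) = Wf q u N v * ?h 1 v lam"
        by (simp only: Wf_def sum_distrib_right)
    qed
    finally show ?thesis .
  qed
  have "Wf q u N lam = (\<Sum>mu\<in>Pn (Suc n) \<union> Ple n. Fq q u N mu * ?h (Suc n - size_part mu) mu lam)"
    by (simp only: Wf_def sz split)
  also have "\<dots> = (\<Sum>mu\<in>Pn (Suc n). Fq q u N mu * ?h (Suc n - size_part mu) mu lam) + (\<Sum>mu\<in>Ple n. Fq q u N mu * ?h (Suc n - size_part mu) mu lam)"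
    by (rule sum.union_disjoint) (use finite_Pn finite_Ple disj in auto)
  finally show ?thesis using A B by simp
qed

lemma part_size0: "is_partition lam \<Longrightarrow> size_part lam = 0 \<Longrightarrow> lam = []"
  by (cases lam) (auto simp: is_partition_def size_part_def)

lemma Wval:
  assumes q: "q > 1"
  shows "is_partition lam \<Longrightarrow> size_part lam = n \<Longrightarrow> (1 - u/q^(Suc N)) * Wf q u N lam = Fq q u (Suc N) lam"
proof (induction n arbitrary: lam)
  case 0
  then have l: "lam = []" using part_size0 by simp
  have P0: "Ple 0 = {[]}" using part_size0 by (auto simp: Ple_def is_partition_def size_part_def)
  have "Wf q u N [] = Fq q u N []" by (simp add: Wf_def P0 size_part_def)
  moreover have "conj_part [] 1 = 0" by simp
  ultimately show ?case using LN[of "[]" q u N] q l one_less_power[OF q, of "Suc N"]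
    by (simp add: is_partition_def)
next
  case (Suc n)
  let ?a = "u/q^(Suc N)"
  have "(1 - ?a) * Wf q u N lam = (1 - ?a) * Fq q u N lam + (\<Sum>v\<in>Pn n. ((1 - ?a) * Wf q u N v) * heads_walk q u (Suc N) 1 v lam)"
    using Wrec[OF Suc.prems] by (simp add: algebra_simps sum_distrib_left)
  also have "\<dots> = (1 - ?a) * Fq q u N lam + (\<Sum>v\<in>Pn n. Fq q u (Suc N) v * heads_walk q u (Suc N) 1 v lam)"
    by (rule arg_cong[where f="\<lambda>x. _ + x"], rule sum.cong[OF refl]) (use Suc.IH in \<open>auto simp: Pn_def\<close>)
  also have "\<dots> = Fq q u (Suc N) lam" using KI[OF Suc.prems q] by simp
  finally show ?case .
qed

lemma kernel:
  assumes pm: "is_partition mu" and sm: "size_part mu \<le> size_part lam"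
  shows "interval_kernel q u M mu lam = heads_walk q u M (size_part lam - size_part mu) mu lam * (1 - u / q ^ M)"
proof -
  have "(\<Sum>k. heads_walk q u M k mu lam * (1 - u / q ^ M)) = (\<Sum>k\<in>{size_part lam - size_part mu}. heads_walk q u M k mu lam * (1 - u / q ^ M))"
  proof (rule suminf_finite)
    fix k assume "k \<notin> {size_part lam - size_part mu}"
    then have "heads_walk q u M k mu lam = 0" using hw_support[OF pm, of q u M k lam] sm by fastforce
    then show "heads_walk q u M k mu lam * (1 - u / q ^ M) = 0" by simp
  qed simp
  then show ?thesis by (simp add: interval_kernel_def)
qed

lemma main:
  assumes q: "q > 1"
  shows "is_partition lam \<Longrightarrow> yta_dist q u N lam = Fq q u N lam"
proof (induction N arbitrary: lam)
  case 0
  then show ?case by (cases lam) (auto simp: Fq_def first_part_def size_part_def)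
next
  case (Suc N)
  have "yta_dist q u (Suc N) lam = (\<Sum>mu\<in>Ple (size_part lam). yta_dist q u N mu * interval_kernel q u (Suc N) mu lam)"
    by (simp add: Ple_def)
  also have "\<dots> = (\<Sum>mu\<in>Ple (size_part lam). (1 - u/q^(Suc N)) * (Fq q u N mu * heads_walk q u (Suc N) (size_part lam - size_part mu) mu lam))"
    by (rule sum.cong[OF refl]) (auto simp: Ple_def Suc.IH kernel)
  also have "\<dots> = (1 - u/q^(Suc N)) * Wf q u N lam" by (simp add: Wf_def sum_distrib_left)
  also have "\<dots> = Fq q u (Suc N) lam" using Wval[OF q Suc.prems refl] .
  finally show ?case .
qed


theorem theorem4:
  fixes q u :: real and N :: nat and lam :: "nat list"
  assumes "q > 1" and "0 < u" and "u < 1" and "is_partition lam"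
  shows "yta_dist q u N lam =
    (if length lam > N then 0
     else u ^ size_part lam * qpoch q (u / q) N * qpoch q (1 / q) N
            / qpoch q (1 / q) (N - conj_part lam 1)
          * (\<Prod>i\<in>{1..first_part lam}.
               1 / (q ^ ((conj_part lam i)\<^sup>2) * qpoch q (1 / q) (mult_part lam i))))"
  using main[OF assms(1) assms(4)] unfolding Fq_def .

end
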